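(* In the setting described in the context, let $\theta_0\in\Theta$ and $h_0,h'\in H$ be such that both pairs $(\theta_0,h_0)$ and $(\theta_0,h')$ satisfy Assumptions A1–A3 below, and suppose that $$\mathbb E[h_0(\mathbf x,\mathbf e)\mid\mathbf x;\theta_0]=\mathbb E[h'(\mathbf x,\mathbf e)\mid\mathbf x;\theta_0]\quad\text{almost surely}.$$ Then $h'=h_0$, i.e. $h'(\mathbf x,\mathbf e)=h_0(\mathbf x,\mathbf e)$ almost surely. (That is, if the payoff parameter $\theta_0$ is identified, then the distribution of play $h_0$ is identified.)
   Context: Players $I=\{1,\dots,d_I\}$, $2\le d_I<\infty$, each choose $y_i\in\{0,1\}$; $Y=\{0,1\}^{d_I}$, $y_{-i}=(y_j)_{j\ne i}$. There is a random vector $(\mathbf z,\mathbf w,\mathbf e,\mathbf y)$: $\mathbf w$ has support $W\subseteq\mathbb R^{d_W}$, $\mathbf z=(\mathbf z_i)_{i\in I}\in\mathbb R^{d_I}$, $\mathbf x=(\mathbf z,\mathbf w)$ (values in $X$) observed covariates, $\mathbf e\in\mathbb R^{d_I}$ unobserved payoff shocks, $\mathbf y\in Y$ observed outcome; the distribution of $\mathbf x$ is fixed. A parameter is $\theta=(\alpha,\beta,\Sigma)$ with measurable $\alpha_{i,y_{-i}}:W\to\mathbb R$, $\beta_i:W\to\mathbb R$, $\Sigma:W\to\mathbb R^{d_I\times d_I}$; $\Theta$ is the set of parameters. Player $i$'s payoff from $y$ at $(x,e)$, $x=(z,w)$, is $y_i(\alpha_{i,y_{-i}}(w)+\beta_i(w)z_i-e_i)$.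 A distribution of play is a measurable $h:Y\times X\times\mathbb R^{d_I}\to[0,1]$ with $\sum_y h(y,x,e)=1$ (interpreted as $\Pr(\mathbf y=y\mid\mathbf x=x,\mathbf e=e)$); $H$ is the set of these. $\mathbb E[h(\mathbf x,\mathbf e)\mid\mathbf x;\theta]$ denotes the expectation of $h(\mathbf x,\mathbf e)=(h(y,\mathbf x,\mathbf e))_{y\in Y}$ with respect to the conditional law $N(0,\Sigma(\mathbf w))$ of $\mathbf e$ given $\mathbf x$ implied by $\theta$. Assumptions on a pair $(\theta,h)$: (A1) for all $w\in W$ the support of $\mathbf z$ given $\mathbf w=w$ is $\mathbb R^{d_I}$, and $\beta_i(w)\ne0$ for all $i,w$; (A2) $\mathbf e\mid(\mathbf z=z,\mathbf w=w)\sim N(0,\Sigma(w))$ for all $z,w$, with $\Sigma(w)$ symmetric positive definite and $\Sigma_{ii}(w)=1$; (A3) there is a measurable $\tilde h$ with $h(\mathbf x,\mathbf e)=\tilde h(\mathbf w,\mathbf v)$ a.s., where $\mathbf v_i=\beta_i(\mathbf w)\mathbf z_i-\mathbf e_i$. *)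

theory Defs
  imports "HOL-Analysis.Analysis" "HOL-Probability.Probability"
begin

text \<open>Players are indexed by a finite type 'i (d_I = CARD('i)); an outcome y in Y = {0,1}^{d_I}
  is a function 'i => bool.  Covariates are x = (z, w) with z :: real^'i and w :: 'w
  (a Euclidean space, W is a subset of it).\<close>

definition mvn_density :: "real^'n^'n \<Rightarrow> real^'n \<Rightarrow> real" where
  "mvn_density S e =
     exp (- (e \<bullet> (matrix_inv S *v e)) / 2) / sqrt ((2 * pi) ^ CARD('n) * det S)"

definition mvn :: "real^'n^'n \<Rightarrow> (real^'n) measure" where
  "mvn S = density lborel (\<lambda>e. ennreal (mvn_density S e))"

definition support_of :: "'a::topological_space measure \<Rightarrow> 'a set" where
  "support_of M = {x. \<forall>U. open U \<and> x \<in> U \<longrightarrow> emeasure M U > 0}"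

text \<open>The parameter space Theta: measurable alpha, beta, Sigma.
  alpha i Y' w stands for alpha_{i,y_{-i}}(w), where y_{-i} is encoded by the set Y' of
  other players choosing 1 (only subsets of UNIV - {i} are relevant).\<close>
definition in_Theta ::
  "('i \<Rightarrow> 'i set \<Rightarrow> 'w::euclidean_space \<Rightarrow> real) \<Rightarrow> ('i \<Rightarrow> 'w \<Rightarrow> real)
     \<Rightarrow> ('w \<Rightarrow> real^'i^'i) \<Rightarrow> bool" where
  "in_Theta \<alpha> \<beta> \<Sigma> \<longleftrightarrow>
     (\<forall>i Y'. \<alpha> i Y' \<in> borel_measurable borel) \<and>
     (\<forall>i. \<beta> i \<in> borel_measurable borel) \<and> \<Sigma> \<in> borel_measurable borel"

definition distribution_of_play ::
  "(('i::finite \<Rightarrow> bool) \<Rightarrow> ((real^'i) \<times> 'w::euclidean_space) \<Rightarrow> real^'i \<Rightarrow> real) \<Rightarrow> bool" where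
  "distribution_of_play h \<longleftrightarrow>
     (\<forall>y. (\<lambda>(x, e). h y x e) \<in> borel_measurable borel) \<and>
     (\<forall>y x e. 0 \<le> h y x e \<and> h y x e \<le> 1) \<and>
     (\<forall>x e. (\<Sum>y\<in>UNIV. h y x e) = 1)"

definition cond_exp_play ::
  "(('i::finite \<Rightarrow> bool) \<Rightarrow> ((real^'i) \<times> 'w) \<Rightarrow> real^'i \<Rightarrow> real) \<Rightarrow> ('w \<Rightarrow> real^'i^'i)
     \<Rightarrow> ((real^'i) \<times> 'w) \<Rightarrow> ('i \<Rightarrow> bool) \<Rightarrow> real" where
  "cond_exp_play h \<Sigma> x y = (\<integral>e. h y x e \<partial>mvn (\<Sigma> (snd x)))"

definition index_v :: "('i \<Rightarrow> 'w \<Rightarrow> real) \<Rightarrow> ((real^'i) \<times> 'w) \<Rightarrow> real^'i \<Rightarrow> real^'i" where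
  "index_v \<beta> x e = (\<chi> i. \<beta> i (snd x) * fst x $ i - e $ i)"

text \<open>Kz is a (measurable) regular conditional distribution of z given w under the law Px of x.\<close>
definition cond_dist_z_given_w ::
  "((real^'i) \<times> 'w::euclidean_space) measure \<Rightarrow> ('w \<Rightarrow> (real^'i) measure) \<Rightarrow> bool" where
  "cond_dist_z_given_w Px Kz \<longleftrightarrow>
     Kz \<in> measurable borel (prob_algebra borel) \<and>
     (\<forall>A \<in> sets borel. \<forall>B \<in> sets borel.
        emeasure Px (A \<times> B) =
          (\<integral>\<^sup>+ w. indicator B w * emeasure (Kz w) A \<partial>distr Px borel snd))"

text \<open>Assumption A1 (W is the support of w).\<close>
definition assm_A1 :: "((real^'i) \<times> 'w::euclidean_space) measure \<Rightarrow> ('w \<Rightarrow> (real^'i) measure)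
     \<Rightarrow> ('i \<Rightarrow> 'w \<Rightarrow> real) \<Rightarrow> bool" where
  "assm_A1 Px Kz \<beta> \<longleftrightarrow>
     (\<forall>w \<in> support_of (distr Px borel snd). support_of (Kz w) = UNIV) \<and>
     (\<forall>i. \<forall>w \<in> support_of (distr Px borel snd). \<beta> i w \<noteq> 0)"

text \<open>Assumption A2: e | (z,w) ~ N(0, Sigma(w)) (built into the joint law used below),
  with Sigma(w) symmetric positive definite with unit diagonal.\<close>
definition assm_A2 :: "((real^'i) \<times> 'w::euclidean_space) measure \<Rightarrow> ('w \<Rightarrow> real^'i^'i) \<Rightarrow> bool" where
  "assm_A2 Px \<Sigma> \<longleftrightarrow>
     (\<forall>w \<in> support_of (distr Px borel snd).
        transpose (\<Sigma> w) = \<Sigma> w \<and>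
        (\<forall>v. v \<noteq> 0 \<longrightarrow> v \<bullet> (\<Sigma> w *v v) > 0) \<and>
        (\<forall>i. \<Sigma> w $ i $ i = 1))"

definition assm_A3 :: "((real^'i) \<times> 'w::euclidean_space) measure \<Rightarrow> ('i \<Rightarrow> 'w \<Rightarrow> real)
     \<Rightarrow> ('w \<Rightarrow> real^'i^'i) \<Rightarrow> (('i::finite \<Rightarrow> bool) \<Rightarrow> ((real^'i) \<times> 'w) \<Rightarrow> real^'i \<Rightarrow> real) \<Rightarrow> bool" where
  "assm_A3 Px \<beta> \<Sigma> h \<longleftrightarrow>
     (\<exists>ht :: ('i \<Rightarrow> bool) \<Rightarrow> 'w \<Rightarrow> real^'i \<Rightarrow> real.
        (\<forall>y. (\<lambda>(w, v). ht y w v) \<in> borel_measurable borel) \<and>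
        (AE x in Px. AE e in mvn (\<Sigma> (snd x)).
           \<forall>y. h y x e = ht y (snd x) (index_v \<beta> x e)))"

end

theory Submission
  imports Defs
begin


lemma vmt: fixes A :: "real^'n^'m" shows "x v* A = transpose A *v x"
proof -
  show ?thesis using vector_transpose_matrix[of x "transpose A"] by simp
qed

lemma sym_dot:
  fixes A :: "real^'n^'n"
  assumes "transpose A = A"
  shows "x \<bullet> (A *v y) = (A *v x) \<bullet> y"
  by (metis assms dot_lmul_matrix vmt)

lemma pd_invertible:
  fixes S :: "real^'n^'n"
  assumes pd: "\<forall>v. v \<noteq> 0 \<longrightarrow> v \<bullet> (S *v v) > 0"
  shows "invertible S"
proof -
  have "\<forall>x. S *v x = 0 \<longrightarrow> x = 0" using pd by (metis inner_zero_right less_irrefl)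
  then have "\<exists>B. B ** S = mat 1" using matrix_left_invertible_ker by blast
  then show ?thesis using invertible_left_inverse by blast
qed

lemma matrix_inv_both:
  fixes S :: "real^'n^'n"
  assumes "invertible S"
  shows "S ** matrix_inv S = mat 1" "matrix_inv S ** S = mat 1"
proof -
  have "\<exists>A'. S ** A' = mat 1 \<and> A' ** S = mat 1" using assms invertible_def by blast
  then have "S ** matrix_inv S = mat 1 \<and> matrix_inv S ** S = mat 1"
    unfolding matrix_inv_def by (rule someI_ex)
  then show "S ** matrix_inv S = mat 1" "matrix_inv S ** S = mat 1" by auto
qed

lemma matrix_inv_sym:
  fixes S :: "real^'n^'n"
  assumes "invertible S" "transpose S = S"
  shows "transpose (matrix_inv S) = matrix_inv S"
proof -
  let ?A = "matrix_inv S"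
  have "transpose ?A ** S = mat 1"
    by (metis assms(2) matrix_inv_both(1)[OF assms(1)] matrix_transpose_mul transpose_mat)
  then have "transpose ?A = transpose ?A ** (S ** ?A)"
    using matrix_inv_both(1)[OF assms(1)] by (simp add: matrix_mul_rid)
  also have "\<dots> = ?A" using \<open>transpose ?A ** S = mat 1\<close>
    by (metis matrix_mul_assoc matrix_mul_lid)
  finally show ?thesis .
qed

lemma matrix_inv_pd:
  fixes S :: "real^'n^'n"
  assumes pd: "\<forall>v. v \<noteq> 0 \<longrightarrow> v \<bullet> (S *v v) > 0" and sym: "transpose S = S"
  shows "\<forall>v. v \<noteq> 0 \<longrightarrow> v \<bullet> (matrix_inv S *v v) > 0"
proof (intro allI impI)
  fix v :: "real^'n" assume v: "v \<noteq> 0"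
  have inv: "invertible S" using pd_invertible[OF pd] .
  let ?u = "matrix_inv S *v v"
  have vu: "v = S *v ?u"
    by (simp add: matrix_vector_mul_assoc matrix_inv_both(1)[OF inv])
  then have "?u \<noteq> 0" using v by auto
  then have "?u \<bullet> (S *v ?u) > 0" using pd by blast
  moreover have "v \<bullet> ?u = ?u \<bullet> (S *v ?u)" using vu by (simp add: inner_commute)
  ultimately show "v \<bullet> (matrix_inv S *v v) > 0" by simp
qed

lemma pd_lower_bound:
  fixes M :: "real^'n^'n"
  assumes pd: "\<forall>v. v \<noteq> 0 \<longrightarrow> v \<bullet> (M *v v) > 0"
  shows "\<exists>l>0. \<forall>v. l * norm v ^ 2 \<le> v \<bullet> (M *v v)"
proof -
  let ?S = "sphere (0::real^'n) 1"
  have cont: "continuous_on ?S (\<lambda>v. v \<bullet> (M *v v))"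
    by (intro continuous_intros continuous_on_id linear_continuous_on matrix_vector_mul_linear bounded_linear_intros)
  have ne: "?S \<noteq> {}"
  proof -
    have "axis undefined 1 \<in> ?S" by (simp add: norm_axis_1)
    then show ?thesis by blast
  qed
  obtain x where x: "x \<in> ?S" "\<forall>y\<in>?S. x \<bullet> (M *v x) \<le> y \<bullet> (M *v y)"
    using continuous_attains_inf[OF compact_sphere ne cont] by blast
  have "x \<noteq> 0" using x(1) by auto
  then have lpos: "x \<bullet> (M *v x) > 0" using pd by blast
  show ?thesis
  proof (intro exI[of _ "x \<bullet> (M *v x)"] conjI allI lpos)
    fix v :: "real^'n"
    show "x \<bullet> (M *v x) * norm v ^ 2 \<le> v \<bullet> (M *v v)"
    proof (cases "v = 0")
      case True then show ?thesis by simp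
    next
      case False
      let ?u = "(1 / norm v) *\<^sub>R v"
      have "?u \<in> ?S" using False by simp
      then have "x \<bullet> (M *v x) \<le> ?u \<bullet> (M *v ?u)" using x(2) by blast
      also have "?u \<bullet> (M *v ?u) = (v \<bullet> (M *v v)) / norm v ^ 2"
        by (simp add: matrix_vector_mult_scaleR power2_eq_square)
      finally show ?thesis using False by (simp add: field_simps)
    qed
  qed
qed

lemma integrable_exp_neg_sq:
  fixes c :: real
  assumes c: "c > 0"
  shows "integrable lborel (\<lambda>v::'a::euclidean_space. exp (- c * norm v ^ 2))"
proof -
  have m: "(\<lambda>x::real. ennreal (exp (- c * x^2))) \<in> borel_measurable borel" by measurable
  have 1: "(\<integral>\<^sup>+x. ennreal (exp (- c * x^2)) \<partial>lborel) < \<infinity>"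
  proof -
    have "integrable lborel (\<lambda>x::real. exp (- c * x^2))"
    proof -
      have "integrable lborel (\<lambda>x. normal_density 0 (1 / sqrt (2*c)) x)"
        using c by (intro integrable_normal_density) auto
      then have "integrable lborel (\<lambda>x. (sqrt (2 * pi) * (1 / sqrt (2*c))) * normal_density 0 (1 / sqrt (2*c)) x)"
        by simp
      moreover have "(\<lambda>x. (sqrt (2 * pi) * (1 / sqrt (2*c))) * normal_density 0 (1 / sqrt (2*c)) x) = (\<lambda>x. exp (- c * x^2))"
        using c by (auto simp: normal_density_def fun_eq_iff power_divide real_sqrt_mult[symmetric])
      ultimately show ?thesis by simp
    qed
    then show ?thesis
      by (simp add: integrable_iff_bounded)
  qed
  have eq: "\<And>v::'a. ennreal (exp (- c * norm v ^ 2)) = (\<Prod>b\<in>Basis. ennreal (exp (- c * (v \<bullet> b)^2)))"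
  proof -
    fix v :: 'a
    have "norm v ^ 2 = (\<Sum>b\<in>Basis. (v \<bullet> b)^2)"
      using euclidean_inner[of v v] dot_square_norm[of v] by (simp add: power2_eq_square)
    then have "exp (- c * norm v ^ 2) = (\<Prod>b\<in>Basis. exp (- c * (v \<bullet> b)^2))"
      by (simp add: sum_distrib_left exp_sum[symmetric])
    then show "ennreal (exp (- c * norm v ^ 2)) = (\<Prod>b\<in>Basis. ennreal (exp (- c * (v \<bullet> b)^2)))"
      by (simp add: prod_ennreal)
  qed
  have "(\<integral>\<^sup>+v. ennreal (exp (- c * norm (v::'a) ^ 2)) \<partial>lborel) = (\<Prod>b\<in>(Basis::'a set). (\<integral>\<^sup>+x. ennreal (exp (- c * x^2)) \<partial>lborel))"
    unfolding eq by (rule nn_integral_lborel_prod[where f="\<lambda>b x. ennreal (exp (- c * x^2))"]) auto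
  also have "\<dots> < \<infinity>" using 1 by (simp add: power_less_top_ennreal)
  finally show ?thesis
    by (intro integrableI_bounded) auto
qed

lemma integrable_exp_neg_sq_lin:
  fixes c R :: real
  assumes c: "c > 0"
  shows "integrable lborel (\<lambda>v::'a::euclidean_space. exp (- c * norm v ^ 2 + R * norm v))"
proof (rule Bochner_Integration.integrable_bound)
  show "integrable lborel (\<lambda>v::'a. exp (R^2 / (2*c)) * exp (- (c/2) * norm v ^ 2))"
    using integrable_exp_neg_sq[of "c/2"] c by simp
  show "(\<lambda>v::'a. exp (- c * norm v ^ 2 + R * norm v)) \<in> borel_measurable lborel" by measurable
  show "AE v in lborel. norm (exp (- c * norm (v::'a) ^ 2 + R * norm v)) \<le> norm (exp (R^2 / (2*c)) * exp (- (c/2) * norm v ^ 2))"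
  proof -
    have *: "norm (exp (- c * norm v ^ 2 + R * norm v)) \<le> norm (exp (R^2 / (2*c)) * exp (- (c/2) * norm v ^ 2))" for v :: 'a
    proof -
    have "0 \<le> (c * norm v - R)^2 / (2 * c)" using c by simp
    then have "- c * norm v ^ 2 + R * norm v \<le> R^2 / (2*c) + (- (c/2) * norm v ^ 2)"
      using c by (simp add: field_simps power2_eq_square)
    then show "norm (exp (- c * norm v ^ 2 + R * norm v)) \<le> norm (exp (R^2 / (2*c)) * exp (- (c/2) * norm v ^ 2))"
      by (simp add: exp_add[symmetric])
    qed
    show ?thesis by (rule AE_I2) (rule *)
  qed
qed



lemma powser_zero_coeffs:
  fixes c :: "nat \<Rightarrow> real"
  assumes S: "\<And>s. (\<lambda>k. c k * s^k) sums 0"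
  shows "c k = 0"
proof (induction k rule: less_induct)
  case (less k)
  define g where "g s = (\<Sum>j. c (j + k) * s^j)" for s :: real
  have sh: "(\<lambda>j. c (j + k) * s^j) sums 0" if "s \<noteq> 0" for s
  proof -
    have "(\<lambda>j. c (j + k) * s^(j + k)) sums (0 - (\<Sum>i<k. c i * s^i))"
      using sums_split_initial_segment[OF S[of s], of k] by simp
    also have "(\<Sum>i<k. c i * s^i) = 0" using less by simp
    finally have "(\<lambda>j. (1 / s^k) * (c (j + k) * s^(j + k))) sums ((1 / s^k) * 0)"
      by (intro sums_mult) simp
    moreover have "(\<lambda>j. (1 / s^k) * (c (j + k) * s^(j + k))) = (\<lambda>j. c (j + k) * s^j)"
      using that by (auto simp: fun_eq_iff power_add)
    ultimately show ?thesis by simp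
  qed
  have summ: "summable (\<lambda>j. c (j + k) * s^j)" for s
  proof (cases "s = 0")
    case True
    show ?thesis unfolding True using powser_sums_zero[of "\<lambda>j. c (j + k)"] by (rule sums_summable)
  next
    case False then show ?thesis using sh sums_summable by blast
  qed
  have cont: "isCont g 0" unfolding g_def
    by (rule isCont_powser_converges_everywhere) (rule summ)
  have ev: "eventually (\<lambda>s. g s = 0) (at (0::real))"
    unfolding eventually_at_filter using sh by (auto simp: g_def sums_iff)
  have "(g \<longlongrightarrow> g 0) (at 0)" using cont by (simp add: isCont_def)
  moreover have "(g \<longlongrightarrow> 0) (at 0)"
    by (rule tendsto_eventually) (rule ev)
  ultimately have "g 0 = 0" by (rule tendsto_unique[rotated]) simp
  moreover have "g 0 = c k" unfolding g_def by simp
  ultimately show ?case by simp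
qed

lemma pow_fact_le_exp:
  fixes y :: real
  assumes "0 \<le> y"
  shows "(\<Sum>k\<le>n. y^k / fact k) \<le> exp y"
proof -
  have "(\<lambda>k. y^k /\<^sub>R fact k) sums exp y" by (rule exp_converges)
  then have "(\<Sum>k\<in>{..n}. y^k /\<^sub>R fact k) \<le> (\<Sum>k. y^k /\<^sub>R fact k)"
    using assms by (intro sum_le_suminf) (auto simp: sums_iff)
  then show ?thesis using \<open>(\<lambda>k. y^k /\<^sub>R fact k) sums exp y\<close> by (simp add: sums_iff divide_inverse mult.commute)
qed

lemma pow_le_fact_exp:
  fixes x :: real
  shows "\<bar>x\<bar>^k \<le> fact k * (exp x + exp (- x))"
proof -
  have "(\<Sum>j\<le>k. \<bar>x\<bar>^j / fact j) \<le> exp \<bar>x\<bar>" by (rule pow_fact_le_exp) simp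
  moreover have "\<bar>x\<bar>^k / fact k \<le> (\<Sum>j\<le>k. \<bar>x\<bar>^j / fact j)"
    by (rule member_le_sum) auto
  moreover have "exp \<bar>x\<bar> \<le> exp x + exp (- x)" by (cases "0 \<le> x") auto
  ultimately have "\<bar>x\<bar>^k / fact k \<le> exp x + exp (- x)" by linarith
  then show ?thesis by (simp add: field_simps)
qed

locale mgf_fin =
  fixes M :: "real measure"
  assumes sM: "sets M = sets borel"
  and fM: "\<And>s. (\<integral>\<^sup>+x. ennreal (exp (s * x)) \<partial>M) < \<infinity>"
begin

lemma space_M: "space M = UNIV" using sets_eq_imp_space_eq[OF sM] by simp

lemma meas_M: "f \<in> borel_measurable M \<longleftrightarrow> f \<in> borel_measurable borel"
  by (simp add: measurable_cong_sets[OF sM refl])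

lemma int_exp: "integrable M (\<lambda>x. exp (s * x))"
  using fM[of s] by (simp add: integrable_iff_bounded meas_M)

lemma int_exp_sum: "integrable M (\<lambda>x. fact k * (exp x + exp (- x)))"
  using int_exp[of 1] int_exp[of "-1"] by auto

lemma int_pow: "integrable M (\<lambda>x. x^k)"
proof (rule Bochner_Integration.integrable_bound[OF int_exp_sum[of k]])
  show "(\<lambda>x. x^k) \<in> borel_measurable M" by (simp add: meas_M)
  show "AE x in M. norm (x^k) \<le> norm (fact k * (exp x + exp (- x)))"
    using pow_le_fact_exp[of _ k] by (intro AE_I2) (simp add: power_abs)
qed

lemma int_abs_pow: "integrable M (\<lambda>x. \<bar>x\<bar>^k)"
  using integrable_abs[OF int_pow[of k]] by (simp add: power_abs)

lemma sum_bound: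
  fixes t :: real
  shows "summable (\<lambda>k. \<integral>x. \<bar>t * x\<bar>^k / fact k \<partial>M)"
proof (rule bounded_imp_summable)
  show "0 \<le> (\<integral>x. \<bar>t * x\<bar>^k / fact k \<partial>M)" for k by (intro integral_nonneg_AE) auto
  have ii: "integrable M (\<lambda>x. \<bar>t * x\<bar>^k / fact k)" for k
    using int_abs_pow[of k] by (simp add: abs_mult power_mult_distrib)
  fix n
  have "(\<Sum>k\<le>n. \<integral>x. \<bar>t * x\<bar>^k / fact k \<partial>M) = (\<integral>x. (\<Sum>k\<le>n. \<bar>t * x\<bar>^k / fact k) \<partial>M)"
    using ii by (subst Bochner_Integration.integral_sum) auto
  also have "\<dots> \<le> (\<integral>x. exp (t * x) + exp (- t * x) \<partial>M)"
  proof (rule integral_mono)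
    show "integrable M (\<lambda>x. \<Sum>k\<le>n. \<bar>t * x\<bar> ^ k / fact k)" using ii by auto
    show "integrable M (\<lambda>x. exp (t * x) + exp (- t * x))"
      by (rule Bochner_Integration.integrable_add[OF int_exp int_exp])
    fix x
    have "(\<Sum>k\<le>n. \<bar>t * x\<bar> ^ k / fact k) \<le> exp \<bar>t * x\<bar>" by (rule pow_fact_le_exp) simp
    also have "\<dots> \<le> exp (t * x) + exp (- t * x)" by (cases "0 \<le> t * x") auto
    finally show "(\<Sum>k\<le>n. \<bar>t * x\<bar> ^ k / fact k) \<le> exp (t * x) + exp (- t * x)" .
  qed
  finally show "(\<Sum>k\<le>n. \<integral>x. \<bar>t * x\<bar>^k / fact k \<partial>M) \<le> (\<integral>x. exp (t * x) + exp (- t * x) \<partial>M)" .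
qed

lemma mgf_sums: "(\<lambda>k. s^k / fact k * (\<integral>x. x^k \<partial>M)) sums (\<integral>x. exp (s * x) \<partial>M)"
proof -
  let ?f = "\<lambda>k x. (s * x)^k /\<^sub>R fact k"
  have ii: "integrable M (?f k)" for k
    using int_pow[of k] by (simp add: power_mult_distrib)
  have "(\<lambda>k. integral\<^sup>L M (?f k)) sums (\<integral>x. (\<Sum>k. ?f k x) \<partial>M)"
  proof (rule sums_integral)
    show "integrable M (?f k)" for k by (rule ii)
    show "AE x in M. summable (\<lambda>k. norm (?f k x))" by (intro AE_I2 summable_norm_exp)
    have "(\<lambda>k. \<integral>x. norm (?f k x) \<partial>M) = (\<lambda>k. \<integral>x. \<bar>s * x\<bar>^k / fact k \<partial>M)"
      by (intro ext Bochner_Integration.integral_cong[OF refl]) (simp add: abs_mult power_abs power_mult_distrib field_simps)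
    then show "summable (\<lambda>k. \<integral>x. norm (?f k x) \<partial>M)"
      using sum_bound[of s] by simp
  qed
  moreover have "(\<lambda>x. (\<Sum>k. ?f k x)) = (\<lambda>x. exp (s * x))"
    by (intro ext) (rule sums_unique[OF exp_converges, symmetric])
  moreover have "integral\<^sup>L M (?f k) = s^k / fact k * (\<integral>x. x^k \<partial>M)" for k
  proof -
    have "integral\<^sup>L M (?f k) = (\<integral>x. (s^k / fact k) * x^k \<partial>M)"
      by (simp add: power_mult_distrib divide_inverse mult.commute mult.left_commute)
    also have "\<dots> = s^k / fact k * (\<integral>x. x^k \<partial>M)" by simp
    finally show ?thesis .
  qed
  ultimately show ?thesis by simp
qed

lemma char_sums: "(\<lambda>k. ((\<i> * complex_of_real t)^k /\<^sub>R fact k) * complex_of_real (\<integral>x. x^k \<partial>M)) sums char M t"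
proof -
  let ?f = "\<lambda>k x. (\<i> * complex_of_real (t * x))^k /\<^sub>R fact k"
  have eqf: "?f k = (\<lambda>x. ((\<i> * complex_of_real t)^k /\<^sub>R fact k) * complex_of_real (x^k))" for k
    by (auto simp: fun_eq_iff power_mult_distrib scaleR_conv_of_real)
  have ii: "integrable M (?f k)" for k
    unfolding eqf using int_pow[of k] by (intro integrable_mult_right integrable_of_real) 
  have "(\<lambda>k. integral\<^sup>L M (?f k)) sums (\<integral>x. (\<Sum>k. ?f k x) \<partial>M)"
  proof (rule sums_integral)
    show "integrable M (?f k)" for k by (rule ii)
    show "AE x in M. summable (\<lambda>k. norm (?f k x))" by (intro AE_I2 summable_norm_exp)
    have "(\<lambda>k. \<integral>x. norm (?f k x) \<partial>M) = (\<lambda>k. \<integral>x. \<bar>t * x\<bar>^k / fact k \<partial>M)"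
      by (intro ext Bochner_Integration.integral_cong[OF refl]) (simp add: norm_power norm_mult abs_mult power_abs power_mult_distrib field_simps)
    then show "summable (\<lambda>k. \<integral>x. norm (?f k x) \<partial>M)"
      using sum_bound[of t] by simp
  qed
  moreover have "(\<lambda>x. (\<Sum>k. ?f k x)) = (\<lambda>x. iexp (t * x))"
    by (intro ext) (rule sums_unique[OF exp_converges, symmetric])
  moreover have "integral\<^sup>L M (?f k) = ((\<i> * complex_of_real t)^k /\<^sub>R fact k) * complex_of_real (\<integral>x. x^k \<partial>M)" for k
    unfolding eqf by (subst integral_mult_right_zero) (subst integral_complex_of_real, rule refl)
  ultimately show ?thesis by (simp add: char_def)
qed

end

lemma mgf_unique_1d:
  fixes M N :: "real measure"
  assumes sM: "sets M = sets borel" and sN: "sets N = sets borel"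
  and fM: "\<And>s. (\<integral>\<^sup>+x. ennreal (exp (s * x)) \<partial>M) < \<infinity>"
  and fN: "\<And>s. (\<integral>\<^sup>+x. ennreal (exp (s * x)) \<partial>N) < \<infinity>"
  and eq: "\<And>s. (\<integral>\<^sup>+x. ennreal (exp (s * x)) \<partial>M) = (\<integral>\<^sup>+x. ennreal (exp (s * x)) \<partial>N)"
  shows "M = N"
proof -
  interpret M: mgf_fin M using sM fM by unfold_locales
  interpret N: mgf_fin N using sN fN by unfold_locales
  have inteq: "(\<integral>x. exp (s * x) \<partial>M) = (\<integral>x. exp (s * x) \<partial>N)" for s
  proof -
    have "ennreal (\<integral>x. exp (s * x) \<partial>M) = ennreal (\<integral>x. exp (s * x) \<partial>N)"
      using eq[of s] M.int_exp[of s] N.int_exp[of s]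
      by (simp add: nn_integral_eq_integral[symmetric])
    then show ?thesis by (simp add: integral_nonneg_AE)
  qed
  define d where "d k = ((\<integral>x. x^k \<partial>M) - (\<integral>x. x^k \<partial>N)) / fact k" for k
  have "(\<lambda>k. d k * s^k) sums 0" for s
  proof -
    have "(\<lambda>k. s^k / fact k * (\<integral>x. x^k \<partial>M) - s^k / fact k * (\<integral>x. x^k \<partial>N)) sums
        ((\<integral>x. exp (s * x) \<partial>M) - (\<integral>x. exp (s * x) \<partial>N))"
      by (intro sums_diff M.mgf_sums N.mgf_sums)
    then have "(\<lambda>k. s^k / fact k * (\<integral>x. x^k \<partial>M) - s^k / fact k * (\<integral>x. x^k \<partial>N)) sums 0"
      by (simp only: inteq diff_self)
    then show ?thesis by (simp add: d_def field_simps)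
  qed
  then have "d k = 0" for k by (rule powser_zero_coeffs)
  then have mom: "(\<integral>x. x^k \<partial>M) = (\<integral>x. x^k \<partial>N)" for k by (simp add: d_def)
  have ch: "char M = char N"
  proof
    fix t
    show "char M t = char N t"
      using M.char_sums[of t] N.char_sums[of t] unfolding mom by (rule sums_unique2)
  qed
  have finM: "finite_measure M"
    using M.fM[of 0] by (intro finite_measureI) (simp add: less_top)
  have finN: "finite_measure N"
    using N.fM[of 0] by (intro finite_measureI) (simp add: less_top)
  define c where "c = measure M (space M)"
  have cN: "c = measure N (space N)"
    using mom[of 0] by (simp add: c_def)
  have c0: "0 \<le> c" by (simp add: c_def)
  have emM: "emeasure M (space M) = ennreal c"
    using finM by (simp add: c_def finite_measure.emeasure_eq_measure)
  have emN: "emeasure N (space N) = ennreal c"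
    using finN by (simp add: cN finite_measure.emeasure_eq_measure)
  show ?thesis
  proof (cases "c = 0")
    case True
    show ?thesis
    proof (rule measure_eqI)
      show "sets M = sets N" using sM sN by simp
      fix A assume A: "A \<in> sets M"
      have "emeasure M A \<le> emeasure M (space M)" by (rule emeasure_space)
      then have 1: "emeasure M A = 0" using emM True by simp
      have "emeasure N A \<le> emeasure N (space N)" by (rule emeasure_space)
      then have 2: "emeasure N A = 0" using emN True by simp
      show "emeasure M A = emeasure N A" using 1 2 by simp
    qed
  next
    case False
    then have cpos: "c > 0" using c0 by simp
    define M' where "M' = density M (\<lambda>_. ennreal (1 / c))"
    define N' where "N' = density N (\<lambda>_. ennreal (1 / c))"
    have rd: "real_distribution (density L (\<lambda>_. ennreal (1 / c)))"
      if sL: "sets L = sets borel" and eL: "emeasure L (space L) = ennreal c" for L :: "real measure"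
    proof -
      have "emeasure (density L (\<lambda>_. ennreal (1 / c))) (space (density L (\<lambda>_. ennreal (1 / c)))) = 1"
        using eL cpos by (simp add: emeasure_density ennreal_mult'[symmetric] nn_integral_cmult)
      then have "prob_space (density L (\<lambda>_. ennreal (1 / c)))" by (rule prob_spaceI)
      moreover have "sets (density L (\<lambda>_. ennreal (1 / c))) = sets borel" using sL by simp
      ultimately show ?thesis
        by (simp add: real_distribution_def real_distribution_axioms_def)
    qed
    have chd: "char (density L (\<lambda>_. ennreal (1 / c))) t = (1 / c) *\<^sub>R char L t"
      if sL: "sets L = sets borel" for L :: "real measure" and t
    proof -
      have mL: "(\<lambda>x. iexp (t * x)) \<in> borel_measurable L"
        by (subst measurable_cong_sets[OF sL refl]) measurable
      show ?thesis unfolding char_def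
        using cpos by (subst integral_density[OF mL]) auto
    qed
    have "M' = N'"
      unfolding M'_def N'_def
    proof (rule Levy_uniqueness)
      show "real_distribution (density M (\<lambda>_. ennreal (1 / c)))" by (rule rd[OF sM emM])
      show "real_distribution (density N (\<lambda>_. ennreal (1 / c)))" by (rule rd[OF sN emN])
      show "char (density M (\<lambda>_. ennreal (1 / c))) = char (density N (\<lambda>_. ennreal (1 / c)))"
        using chd[OF sM] chd[OF sN] ch by (auto simp: fun_eq_iff)
    qed
    have bk: "density (density L (\<lambda>_. ennreal (1 / c))) (\<lambda>_. ennreal c) = L" for L :: "real measure"
      using cpos by (subst density_density_eq) (auto simp: ennreal_mult'[symmetric] density_1)
    show ?thesis using bk[of M] bk[of N] \<open>M' = N'\<close> unfolding M'_def N'_def by metis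
  qed
qed


lemma vec_nth_meas[measurable]: "(\<lambda>v::real^'n. v$i) \<in> borel_measurable borel" by measurable

lemma box_prod_meas:
  assumes [measurable]: "\<And>i. A i \<in> sets borel"
  shows "{v::real^'n. \<forall>i. v$i \<in> A i} \<in> sets borel"
  by measurable

lemma ind_comp_meas:
  assumes "B \<in> sets borel"
  shows "(\<lambda>v::real^'n. indicator B (v$i) :: real) \<in> borel_measurable borel"
  using measurable_compose[OF vec_nth_meas borel_measurable_indicator[OF assms]] .

definition WW :: "'n set \<Rightarrow> ('n \<Rightarrow> real set) \<Rightarrow> ('n \<Rightarrow> real) \<Rightarrow> real^'n \<Rightarrow> real" where
  "WW S A t v = (\<Prod>i\<in>S. indicator (A i) (v$i)) * exp (\<Sum>i\<in>-S. t i * v$i)"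

lemma WW_meas:
  assumes "\<forall>i\<in>S. A i \<in> sets borel"
  shows "WW S A t \<in> borel_measurable borel"
  unfolding WW_def[abs_def]
  using assms by (intro borel_measurable_times borel_measurable_prod ind_comp_meas) (auto intro!: borel_measurable_exp)

lemma sum_compl_inner:
  fixes t :: "'n::finite \<Rightarrow> real"
  shows "(\<Sum>i\<in>-S. t i * v$i) = (\<chi> i. if i \<in> S then 0 else t i) \<bullet> v"
proof -
  have "(\<chi> i. if i \<in> S then 0 else t i) \<bullet> v = (\<Sum>i\<in>UNIV. (if i \<in> S then 0 else t i) * v$i)"
    by (simp add: inner_vec_def)
  also have "\<dots> = (\<Sum>i\<in>UNIV. (if i \<in> S then 0 else t i * v$i))"
    by (intro sum.cong) auto
  also have "\<dots> = (\<Sum>i\<in>-S. t i * v$i)"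
    by (simp add: sum.If_cases Compl_eq)
  finally show ?thesis by simp
qed

lemma WW_le: "WW S A t v \<le> exp ((\<chi> i. if i \<in> S then 0 else t i) \<bullet> v)"
proof -
  have "(\<Prod>i\<in>S. indicator (A i) (v$i) :: real) \<le> 1"
    by (intro prod_le_1) (auto simp: indicator_def)
  then show ?thesis unfolding WW_def sum_compl_inner
    by (intro mult_left_le_one_le) (auto intro!: prod_nonneg)
qed

lemma WW_nonneg: "0 \<le> WW S A t v"
  unfolding WW_def by (auto intro!: prod_nonneg mult_nonneg_nonneg)

lemma WW_insert:
  assumes "j \<notin> S" "finite S"
  shows "WW (insert j S) A t v = indicator (A j) (v$j) * WW S A (t(j := 0)) v"
proof -
  have "-S = insert j (-insert j S)" using assms by auto
  then have "(\<Sum>i\<in>-S. (t(j := 0)) i * v$i) = (\<Sum>i\<in>-insert j S. t i * v$i)"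
    by (simp add: sum.insert_if)
  then show ?thesis unfolding WW_def using assms by (simp add: prod.insert)
qed

lemma WW_shift:
  assumes "j \<notin> S"
  shows "WW S A (t(j := s)) v = exp (s * v$j) * WW S A (t(j := 0)) v"
proof -
  have "-S = insert j (-insert j S)" using assms by auto
  then have "(\<Sum>i\<in>-S. (t(j := s)) i * v$i) = s * v$j + (\<Sum>i\<in>-insert j S. t i * v$i)"
       "(\<Sum>i\<in>-S. (t(j := 0)) i * v$i) = (\<Sum>i\<in>-insert j S. t i * v$i)"
    by (simp_all add: sum.insert_if)
  then show ?thesis unfolding WW_def by (simp add: exp_add)
qed


lemma mgf_unique_nd:
  fixes M N :: "(real^'n) measure"
  assumes sM: "sets M = sets borel" and sN: "sets N = sets borel"
  and fM: "\<And>t. (\<integral>\<^sup>+v. ennreal (exp (t \<bullet> v)) \<partial>M) < \<infinity>"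
  and eq: "\<And>t. (\<integral>\<^sup>+v. ennreal (exp (t \<bullet> v)) \<partial>M) = (\<integral>\<^sup>+v. ennreal (exp (t \<bullet> v)) \<partial>N)"
  shows "M = N"
proof -
  have fN: "(\<integral>\<^sup>+v. ennreal (exp (t \<bullet> v)) \<partial>N) < \<infinity>" for t using fM[of t] eq[of t] by simp
  have mM: "f \<in> borel_measurable M \<longleftrightarrow> f \<in> borel_measurable borel" for f :: "real^'n \<Rightarrow> ennreal"
    by (simp add: measurable_cong_sets[OF sM refl])
  have mN: "f \<in> borel_measurable N \<longleftrightarrow> f \<in> borel_measurable borel" for f :: "real^'n \<Rightarrow> ennreal"
    by (simp add: measurable_cong_sets[OF sN refl])
  have finW: "(\<integral>\<^sup>+v. ennreal (WW S A t v) \<partial>L) < \<infinity>"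
    if fL: "\<And>t. (\<integral>\<^sup>+v. ennreal (exp (t \<bullet> v)) \<partial>L) < \<infinity>" for L :: "(real^'n) measure" and S A t
  proof -
    have "(\<integral>\<^sup>+v. ennreal (WW S A t v) \<partial>L) \<le> (\<integral>\<^sup>+v. ennreal (exp ((\<chi> i. if i \<in> S then 0 else t i) \<bullet> v)) \<partial>L)"
      by (intro nn_integral_mono ennreal_leI WW_le)
    also have "\<dots> < \<infinity>" by (rule fL)
    finally show ?thesis .
  qed
  have claim: "\<forall>(A::'n \<Rightarrow> real set) t. (\<forall>i\<in>S. A i \<in> sets borel) \<longrightarrow>
      (\<integral>\<^sup>+v. ennreal (WW S A t v) \<partial>M) = (\<integral>\<^sup>+v. ennreal (WW S A t v) \<partial>N)"
    if "finite S" for S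
    using that
  proof (induction S rule: finite_induct)
    case empty
    show ?case
    proof (intro allI impI)
      fix A :: "'n \<Rightarrow> real set" and t :: "'n \<Rightarrow> real"
      have "WW {} A t = (\<lambda>v. exp ((\<chi> i. t i) \<bullet> v))"
        by (auto simp: fun_eq_iff WW_def inner_vec_def)
      then show "(\<integral>\<^sup>+v. ennreal (WW {} A t v) \<partial>M) = (\<integral>\<^sup>+v. ennreal (WW {} A t v) \<partial>N)"
        using eq by simp
    qed
  next
    case (insert j S)
    show ?case
    proof (intro allI impI)
      fix A :: "'n \<Rightarrow> real set" and t :: "'n \<Rightarrow> real"
      assume Ab: "\<forall>i\<in>insert j S. A i \<in> sets borel"
      then have AbS: "\<forall>i\<in>S. A i \<in> sets borel" by auto
      have Aj: "A j \<in> sets borel" using Ab by auto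
      define W0 where "W0 = WW S A (t(j := 0))"
      have W0m: "W0 \<in> borel_measurable borel" unfolding W0_def by (rule WW_meas[OF AbS])
      define PM where "PM = distr (density M (\<lambda>v. ennreal (W0 v))) borel (\<lambda>v. v$j)"
      define PN where "PN = distr (density N (\<lambda>v. ennreal (W0 v))) borel (\<lambda>v. v$j)"
      have nnP: "(\<integral>\<^sup>+x. ennreal (exp (s * x)) \<partial>distr (density L (\<lambda>v. ennreal (W0 v))) borel (\<lambda>v. v$j))
          = (\<integral>\<^sup>+v. ennreal (WW S A (t(j := s)) v) \<partial>L)"
        if sL: "sets L = sets borel" for L :: "(real^'n) measure" and s
      proof -
        have m1: "(\<lambda>v::real^'n. v$j) \<in> measurable (density L (\<lambda>v. ennreal (W0 v))) borel"
          by (simp add: measurable_cong_sets[OF sL refl])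
        have m2: "(\<lambda>v. ennreal (W0 v)) \<in> borel_measurable L"
          using W0m by (simp add: measurable_cong_sets[OF sL refl])
        have "(\<integral>\<^sup>+x. ennreal (exp (s * x)) \<partial>distr (density L (\<lambda>v. ennreal (W0 v))) borel (\<lambda>v. v$j))
            = (\<integral>\<^sup>+v. ennreal (exp (s * v$j)) \<partial>density L (\<lambda>v. ennreal (W0 v)))"
          by (rule nn_integral_distr[OF m1]) simp
        also have "\<dots> = (\<integral>\<^sup>+v. ennreal (W0 v) * ennreal (exp (s * v$j)) \<partial>L)"
          by (rule nn_integral_density[OF m2]) (simp add: measurable_cong_sets[OF sL refl])
        also have "\<dots> = (\<integral>\<^sup>+v. ennreal (WW S A (t(j := s)) v) \<partial>L)"
        proof (intro nn_integral_cong)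
          fix v :: "real^'n"
          have "WW S A (t(j := s)) v = exp (s * v$j) * W0 v"
            unfolding W0_def by (rule WW_shift[OF insert.hyps(2)])
          then show "ennreal (W0 v) * ennreal (exp (s * v$j)) = ennreal (WW S A (t(j := s)) v)"
            by (simp add: ennreal_mult'[symmetric] W0_def WW_nonneg mult.commute)
        qed
        finally show ?thesis .
      qed
      have "PM = PN" unfolding PM_def PN_def
      proof (rule mgf_unique_1d)
        fix s
        show "(\<integral>\<^sup>+x. ennreal (exp (s * x)) \<partial>distr (density M (\<lambda>v. ennreal (W0 v))) borel (\<lambda>v. v$j)) < \<infinity>"
          unfolding nnP[OF sM] by (rule finW[OF fM])
        show "(\<integral>\<^sup>+x. ennreal (exp (s * x)) \<partial>distr (density N (\<lambda>v. ennreal (W0 v))) borel (\<lambda>v. v$j)) < \<infinity>"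
          unfolding nnP[OF sN] by (rule finW[OF fN])
        show "(\<integral>\<^sup>+x. ennreal (exp (s * x)) \<partial>distr (density M (\<lambda>v. ennreal (W0 v))) borel (\<lambda>v. v$j)) =
              (\<integral>\<^sup>+x. ennreal (exp (s * x)) \<partial>distr (density N (\<lambda>v. ennreal (W0 v))) borel (\<lambda>v. v$j))"
          unfolding nnP[OF sM] nnP[OF sN] using insert.IH AbS by blast
      qed simp_all
      have emP: "emeasure (distr (density L (\<lambda>v. ennreal (W0 v))) borel (\<lambda>v. v$j)) (A j)
          = (\<integral>\<^sup>+v. ennreal (WW (insert j S) A t v) \<partial>L)"
        if sL: "sets L = sets borel" for L :: "(real^'n) measure"
      proof -
        have m1: "(\<lambda>v::real^'n. v$j) \<in> measurable (density L (\<lambda>v. ennreal (W0 v))) borel"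
          by (simp add: measurable_cong_sets[OF sL refl])
        have m2: "(\<lambda>v. ennreal (W0 v)) \<in> borel_measurable L"
          using W0m by (simp add: measurable_cong_sets[OF sL refl])
        have spL: "space L = UNIV" using sets_eq_imp_space_eq[OF sL] by simp
        have pre: "(\<lambda>v::real^'n. v$j) -` A j \<in> sets L"
          using measurable_sets[OF vec_nth_meas[of j] Aj] sL by simp
        have "emeasure (distr (density L (\<lambda>v. ennreal (W0 v))) borel (\<lambda>v. v$j)) (A j)
            = emeasure (density L (\<lambda>v. ennreal (W0 v))) ((\<lambda>v. v$j) -` A j \<inter> space L)"
          using Aj by (subst emeasure_distr[OF m1]) auto
        also have "\<dots> = (\<integral>\<^sup>+v. ennreal (W0 v) * indicator ((\<lambda>v. v$j) -` A j) v \<partial>L)"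
          using pre spL by (subst emeasure_density[OF m2]) auto
        also have "\<dots> = (\<integral>\<^sup>+v. ennreal (WW (insert j S) A t v) \<partial>L)"
          using insert.hyps
          by (intro nn_integral_cong) (auto simp: W0_def WW_insert indicator_def)
        finally show ?thesis .
      qed
      show "(\<integral>\<^sup>+v. ennreal (WW (insert j S) A t v) \<partial>M) = (\<integral>\<^sup>+v. ennreal (WW (insert j S) A t v) \<partial>N)"
        using emP[OF sM] emP[OF sN] \<open>PM = PN\<close> unfolding PM_def PN_def by simp
    qed
  qed
  define Box where "Box A = {v::real^'n. \<forall>i. v$i \<in> A i}" for A
  define Aset where "Aset = {A :: 'n \<Rightarrow> real set. \<forall>i. A i \<in> sets borel}"
  have emBox: "emeasure M (Box A) = emeasure N (Box A)" if "A \<in> Aset" for A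
  proof -
    have Bm: "Box A \<in> sets borel" using that unfolding Box_def Aset_def by (intro box_prod_meas) auto
    have "WW UNIV A (\<lambda>_. 0) = (\<lambda>v. indicator (Box A) v)"
      by (auto simp: fun_eq_iff WW_def Box_def indicator_def)
    moreover have "\<forall>i\<in>UNIV. A i \<in> sets borel" using that unfolding Aset_def by auto
    ultimately have "(\<integral>\<^sup>+v. indicator (Box A) v \<partial>M) = (\<integral>\<^sup>+v. indicator (Box A) v \<partial>N)"
      using claim[of UNIV, rule_format, of A "\<lambda>_. 0"] by (simp add: ennreal_indicator)
    then show ?thesis using Bm sM sN by simp
  qed
  have sigeq: "sets borel = sigma_sets UNIV (Box ` Aset)"
  proof -
    have "borel = sigma UNIV (Box ` Aset)"
    proof (rule borel_eq_sigmaI1[OF borel_eq_box])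
      fix x assume "x \<in> range (\<lambda>(a, b). box a b :: (real^'n) set)"
      then obtain a b where x: "x = box a b" by auto
      have "x = Box (\<lambda>i. {a$i<..<b$i})" unfolding x Box_def by (auto simp: mem_box_cart)
      moreover have "(\<lambda>i. {a$i<..<b$i}) \<in> Aset" unfolding Aset_def by auto
      ultimately show "x \<in> sets (sigma UNIV (Box ` Aset))" by auto
    next
      fix A assume "A \<in> Aset"
      then show "Box A \<in> sets borel" unfolding Box_def Aset_def by (intro box_prod_meas) auto
    qed
    then have "sets borel = sets (sigma UNIV (Box ` Aset))" by simp
    also have "\<dots> = sigma_sets UNIV (Box ` Aset)" by (rule sets_measure_of) simp
    finally show ?thesis .
  qed
  show ?thesis
  proof (rule measure_eqI_generator_eq[where E="Box ` Aset" and \<Omega>=UNIV and A="\<lambda>_. UNIV"])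
    show "Int_stable (Box ` Aset)"
    proof (rule Int_stableI)
      fix X Y assume "X \<in> Box ` Aset" "Y \<in> Box ` Aset"
      then obtain A B where X: "X = Box A" "A \<in> Aset" and Y: "Y = Box B" "B \<in> Aset" by auto
      have "X \<inter> Y = Box (\<lambda>i. A i \<inter> B i)" unfolding X Y Box_def by auto
      moreover have "(\<lambda>i. A i \<inter> B i) \<in> Aset" using X(2) Y(2) unfolding Aset_def by auto
      ultimately show "X \<inter> Y \<in> Box ` Aset" by auto
    qed
    show "Box ` Aset \<subseteq> Pow UNIV" by auto
    show "\<And>X. X \<in> Box ` Aset \<Longrightarrow> emeasure M X = emeasure N X" using emBox by auto
    show "sets M = sigma_sets UNIV (Box ` Aset)" using sM sigeq by simp
    show "sets N = sigma_sets UNIV (Box ` Aset)" using sN sigeq by simp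
    have "UNIV = Box (\<lambda>_. UNIV)" unfolding Box_def by auto
    moreover have "(\<lambda>_. UNIV) \<in> Aset" unfolding Aset_def by auto
    ultimately show "range (\<lambda>_. UNIV) \<subseteq> Box ` Aset" by auto
    show "(\<Union>i::nat. UNIV) = (UNIV :: (real^'n) set)" by simp
    have "(\<integral>\<^sup>+v. ennreal (exp (0 \<bullet> v)) \<partial>M) = emeasure M UNIV"
      using sets_eq_imp_space_eq[OF sM] by simp
    then show "\<And>i::nat. emeasure M UNIV \<noteq> \<infinity>" using fM[of 0] by simp
  qed
qed



lemma exp_moment_zero:
  fixes G :: "real^'n \<Rightarrow> real"
  assumes Gm: "G \<in> borel_measurable borel"
  and int: "\<And>t. integrable lborel (\<lambda>v. G v * exp (t \<bullet> v))"
  and zero: "\<And>t. (\<integral>v. G v * exp (t \<bullet> v) \<partial>lborel) = 0"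
  shows "AE v in lborel. G v = 0"
proof -
  define Gp where "Gp v = max 0 (G v)" for v
  define Gn where "Gn v = max 0 (- G v)" for v
  have Gpm: "Gp \<in> borel_measurable borel" unfolding Gp_def[abs_def] using Gm by measurable
  have Gnm: "Gn \<in> borel_measurable borel" unfolding Gn_def[abs_def] using Gm by measurable
  have intp: "integrable lborel (\<lambda>v. Gp v * exp (t \<bullet> v))" for t
  proof (rule Bochner_Integration.integrable_bound[OF int[of t]])
    show "(\<lambda>v. Gp v * exp (t \<bullet> v)) \<in> borel_measurable lborel" using Gpm by simp
    show "AE v in lborel. norm (Gp v * exp (t \<bullet> v)) \<le> norm (G v * exp (t \<bullet> v))"
      by (intro AE_I2) (auto simp: Gp_def abs_mult)
  qed
  have intn: "integrable lborel (\<lambda>v. Gn v * exp (t \<bullet> v))" for t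
  proof (rule Bochner_Integration.integrable_bound[OF int[of t]])
    show "(\<lambda>v. Gn v * exp (t \<bullet> v)) \<in> borel_measurable lborel" using Gnm by simp
    show "AE v in lborel. norm (Gn v * exp (t \<bullet> v)) \<le> norm (G v * exp (t \<bullet> v))"
      by (intro AE_I2) (auto simp: Gn_def abs_mult)
  qed
  have diff: "(\<integral>v. Gp v * exp (t \<bullet> v) \<partial>lborel) = (\<integral>v. Gn v * exp (t \<bullet> v) \<partial>lborel)" for t
  proof -
    have "(\<integral>v. Gp v * exp (t \<bullet> v) \<partial>lborel) - (\<integral>v. Gn v * exp (t \<bullet> v) \<partial>lborel)
        = (\<integral>v. Gp v * exp (t \<bullet> v) - Gn v * exp (t \<bullet> v) \<partial>lborel)"
      using intp intn by simp
    also have "\<dots> = (\<integral>v. G v * exp (t \<bullet> v) \<partial>lborel)"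
      by (intro Bochner_Integration.integral_cong) (auto simp: Gp_def Gn_def algebra_simps max_def)
    also have "\<dots> = 0" by (rule zero)
    finally show ?thesis by simp
  qed
  define M where "M = density lborel (\<lambda>v. ennreal (Gp v))"
  define N where "N = density lborel (\<lambda>v. ennreal (Gn v))"
  have nnM: "(\<integral>\<^sup>+v. ennreal (exp (t \<bullet> v)) \<partial>M) = ennreal (\<integral>v. Gp v * exp (t \<bullet> v) \<partial>lborel)" for t
  proof -
    have "(\<integral>\<^sup>+v. ennreal (exp (t \<bullet> v)) \<partial>M) = (\<integral>\<^sup>+v. ennreal (Gp v) * ennreal (exp (t \<bullet> v)) \<partial>lborel)"
      unfolding M_def using Gpm by (subst nn_integral_density) auto
    also have "\<dots> = (\<integral>\<^sup>+v. ennreal (Gp v * exp (t \<bullet> v)) \<partial>lborel)"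
      by (intro nn_integral_cong) (simp add: ennreal_mult' Gp_def)
    also have "\<dots> = ennreal (\<integral>v. Gp v * exp (t \<bullet> v) \<partial>lborel)"
      using intp by (intro nn_integral_eq_integral) (auto simp: Gp_def)
    finally show ?thesis .
  qed
  have nnN: "(\<integral>\<^sup>+v. ennreal (exp (t \<bullet> v)) \<partial>N) = ennreal (\<integral>v. Gn v * exp (t \<bullet> v) \<partial>lborel)" for t
  proof -
    have "(\<integral>\<^sup>+v. ennreal (exp (t \<bullet> v)) \<partial>N) = (\<integral>\<^sup>+v. ennreal (Gn v) * ennreal (exp (t \<bullet> v)) \<partial>lborel)"
      unfolding N_def using Gnm by (subst nn_integral_density) auto
    also have "\<dots> = (\<integral>\<^sup>+v. ennreal (Gn v * exp (t \<bullet> v)) \<partial>lborel)"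
      by (intro nn_integral_cong) (simp add: ennreal_mult' Gn_def)
    also have "\<dots> = ennreal (\<integral>v. Gn v * exp (t \<bullet> v) \<partial>lborel)"
      using intn by (intro nn_integral_eq_integral) (auto simp: Gn_def)
    finally show ?thesis .
  qed
  have "M = N"
  proof (rule mgf_unique_nd)
    show "sets M = sets borel" unfolding M_def by simp
    show "sets N = sets borel" unfolding N_def by simp
    show "(\<integral>\<^sup>+v. ennreal (exp (t \<bullet> v)) \<partial>M) < \<infinity>" for t unfolding nnM by simp
    show "(\<integral>\<^sup>+v. ennreal (exp (t \<bullet> v)) \<partial>M) = (\<integral>\<^sup>+v. ennreal (exp (t \<bullet> v)) \<partial>N)" for t
      unfolding nnM nnN diff ..
  qed
  then have "AE v in lborel. ennreal (Gp v) = ennreal (Gn v)"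
    unfolding M_def N_def using Gpm Gnm by (subst (asm) sigma_finite_measure.density_unique_iff[OF sigma_finite_lborel]) auto
  then show ?thesis
    by (rule AE_mp) (intro AE_I2, auto simp: Gp_def Gn_def max_def split: if_splits)
qed

lemma quad_cont: "continuous_on UNIV (\<lambda>v::real^'n. v \<bullet> (M *v v))"
  by (intro continuous_intros continuous_on_id linear_continuous_on matrix_vector_mul_linear bounded_linear_intros)

lemma quad_meas[measurable]: "(\<lambda>v::real^'n. v \<bullet> (M *v v)) \<in> borel_measurable borel"
  by (rule borel_measurable_continuous_onI[OF quad_cont])

lemma mvn_density_meas[measurable]: "mvn_density S \<in> borel_measurable borel"
  unfolding mvn_density_def[abs_def] by measurable

lemma lborel_reflect: "distr lborel borel (\<lambda>e. u - e) = (lborel :: (real^'n) measure)"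
proof -
  show ?thesis using lborel_affine[of "-1::real" u] by (simp add: density_1)
qed

lemma AE_mvn_transfer:
  assumes "AE v in lborel. P v"
  shows "AE e in mvn S. P (u - e)"
proof -
  have "AE v in distr lborel borel (\<lambda>e. u - e). P v" by (subst lborel_reflect) (rule assms)
  then have "AE e in lborel. P (u - e)" by (rule AE_distrD[rotated]) simp
  then show ?thesis unfolding mvn_def by (subst AE_density) (auto elim: AE_mp)
qed



lemma matvec_cont: "continuous_on UNIV ((*v) (C :: real^'n^'m))"
  by (intro linear_continuous_on matrix_vector_mul_bounded_linear)

lemma diag_mult: "(\<chi> i. b i * z$i) = (\<chi> i j. if i = j then b i else 0) *v (z :: real^'n)"
proof -
  have *: "(\<Sum>j\<in>UNIV. (if i = j then b i else 0) * z$j) = b i * z$i" for i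
  proof -
    have "(\<Sum>j\<in>UNIV. (if i = j then b i else 0) * z$j) = (\<Sum>j\<in>UNIV. if i = j then b i * z$j else 0)"
      by (intro sum.cong) auto
    also have "\<dots> = b i * z$i" by (simp add: sum.delta)
    finally show ?thesis .
  qed
  show ?thesis by (simp add: vec_eq_iff matrix_vector_mult_def *)
qed

lemma conv_zero:
  fixes S :: "real^'n^'n" and b :: "'n \<Rightarrow> real" and D :: "real^'n \<Rightarrow> real" and K :: "(real^'n) measure"
  assumes sym: "transpose S = S" and pd: "\<forall>v. v \<noteq> 0 \<longrightarrow> v \<bullet> (S *v v) > 0"
  and kpos: "0 < sqrt ((2 * pi) ^ CARD('n) * det S)"
  and b: "\<And>i. b i \<noteq> 0"
  and Dm: "D \<in> borel_measurable borel" and Db: "\<And>v. \<bar>D v\<bar> \<le> 1"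
  and sK: "sets K = sets borel" and supp: "support_of K = UNIV"
  and hyp: "AE z in K. (\<integral>e. D ((\<chi> i. b i * z$i) - e) \<partial>mvn S) = 0"
  shows "AE v in lborel. D v = 0"
proof -
  have inv: "invertible S" by (rule pd_invertible[OF pd])
  define A where "A = matrix_inv S"
  have symA: "transpose A = A" unfolding A_def by (rule matrix_inv_sym[OF inv sym])
  have pdA: "\<forall>v. v \<noteq> 0 \<longrightarrow> v \<bullet> (A *v v) > 0" unfolding A_def by (rule matrix_inv_pd[OF pd sym])
  obtain l where l: "l > 0" "\<And>v. l * norm v ^ 2 \<le> v \<bullet> (A *v v)" using pd_lower_bound[OF pdA] by blast
  define k where "k = sqrt ((2 * pi) ^ CARD('n) * det S)"
  have k: "k > 0" using kpos by (simp add: k_def)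
  have dens: "mvn_density S e = exp (- (e \<bullet> (A *v e)) / 2) / k" for e
    by (simp add: mvn_density_def A_def k_def)
  define G where "G v = D v * exp (- (v \<bullet> (A *v v)) / 2)" for v
  have Gm: "G \<in> borel_measurable borel" unfolding G_def[abs_def] using Dm by measurable
  have bnd: "\<bar>G v * exp (t \<bullet> v)\<bar> \<le> exp (- (l/2) * norm v ^ 2 + R * norm v)" if tR: "norm t \<le> R" for t v R
  proof -
    have e: "exp (- (v \<bullet> (A *v v)) / 2) * exp (t \<bullet> v) = exp (- (v \<bullet> (A *v v)) / 2 + t \<bullet> v)"
      by (rule exp_add[symmetric])
    have "\<bar>G v * exp (t \<bullet> v)\<bar> = \<bar>D v\<bar> * (exp (- (v \<bullet> (A *v v)) / 2) * exp (t \<bullet> v))"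
      by (simp add: G_def abs_mult mult.assoc)
    also have "\<dots> \<le> 1 * (exp (- (v \<bullet> (A *v v)) / 2) * exp (t \<bullet> v))"
      by (intro mult_right_mono Db) simp
    also have "\<dots> = exp (- (v \<bullet> (A *v v)) / 2 + t \<bullet> v)" using e by simp
    also have "\<dots> \<le> exp (- (l/2) * norm v ^ 2 + R * norm v)"
    proof -
      have "t \<bullet> v \<le> norm t * norm v" by (rule norm_cauchy_schwarz)
      also have "\<dots> \<le> R * norm v" using tR by (simp add: mult_right_mono)
      finally have "t \<bullet> v \<le> R * norm v" .
      moreover have "l * norm v ^ 2 \<le> v \<bullet> (A *v v)" by (rule l(2))
      ultimately show ?thesis by simp
    qed
    finally show ?thesis .
  qed
  have intG: "integrable lborel (\<lambda>v. G v * exp (t \<bullet> v))" for t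
  proof (rule Bochner_Integration.integrable_bound)
    show "integrable lborel (\<lambda>v::real^'n. exp (- (l/2) * norm v ^ 2 + norm t * norm v))"
      using l(1) by (intro integrable_exp_neg_sq_lin) simp
    show "(\<lambda>v. G v * exp (t \<bullet> v)) \<in> borel_measurable lborel" using Gm by simp
    show "AE v in lborel. norm (G v * exp (t \<bullet> v)) \<le> norm (exp (- (l/2) * norm v ^ 2 + norm t * norm v))"
      using bnd[of t "norm t"] by (intro AE_I2) simp
  qed
  define L where "L t = (\<integral>v. G v * exp (t \<bullet> v) \<partial>lborel)" for t
  have contL: "continuous (at t0) L" for t0
  proof (rule continuous_at_sequentiallyI)
    fix u assume u: "u \<longlonglongrightarrow> t0"
    then have "Bseq u" by (intro convergent_imp_Bseq convergentI)
    then obtain R where R: "R > 0" "\<And>n. norm (u n) \<le> R" unfolding Bseq_def by blast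
    show "(\<lambda>n. L (u n)) \<longlonglongrightarrow> L t0"
      unfolding L_def
    proof (rule integral_dominated_convergence[where w="\<lambda>v. exp (- (l/2) * norm v ^ 2 + R * norm v)"])
      show "(\<lambda>v. G v * exp (t0 \<bullet> v)) \<in> borel_measurable lborel" using Gm by simp
      show "(\<lambda>v. G v * exp (u n \<bullet> v)) \<in> borel_measurable lborel" for n using Gm by simp
      show "integrable lborel (\<lambda>v::real^'n. exp (- (l/2) * norm v ^ 2 + R * norm v))"
        using l(1) by (intro integrable_exp_neg_sq_lin) simp
      show "AE v in lborel. (\<lambda>n. G v * exp (u n \<bullet> v)) \<longlonglongrightarrow> G v * exp (t0 \<bullet> v)"
        using u by (intro AE_I2 tendsto_intros) auto
      show "AE v in lborel. norm (G v * exp (u n \<bullet> v)) \<le> exp (- (l/2) * norm v ^ 2 + R * norm v)" for n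
        using bnd[OF R(2)[of n]] by (intro AE_I2) simp
    qed
  qed
  then have contLo: "continuous_on UNIV L" by (intro continuous_at_imp_continuous_on) auto
  define Bm :: "real^'n^'n" where "Bm = (\<chi> i j. if i = j then b i else 0)"
  define C where "C = A ** Bm"
  have contF: "continuous_on UNIV (\<lambda>z. L (C *v z))"
    by (rule continuous_on_compose2[OF contLo matvec_cont]) auto
  have ident: "(\<integral>e. D (u - e) \<partial>mvn S) = (1/k) * exp (- (u \<bullet> (A *v u)) / 2) * L (A *v u)" for u
  proof -
    have Dum: "(\<lambda>e. D (u - e)) \<in> borel_measurable borel" using Dm by measurable
    have "(\<integral>e. D (u - e) \<partial>mvn S) = (\<integral>e. mvn_density S e * D (u - e) \<partial>lborel)"
      unfolding mvn_def
      by (subst integral_density) (use Dum k in \<open>auto simp: dens\<close>)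
    also have "\<dots> = (\<integral>e. mvn_density S e * D (u - e) \<partial>distr lborel borel (\<lambda>e. u - e))"
      by (simp add: lborel_reflect)
    also have "\<dots> = (\<integral>v. mvn_density S (u - v) * D (u - (u - v)) \<partial>lborel)"
      using Dum by (subst integral_distr) auto
    also have "\<dots> = (\<integral>v. (1/k) * exp (- (u \<bullet> (A *v u)) / 2) * (G v * exp ((A *v u) \<bullet> v)) \<partial>lborel)"
    proof (intro Bochner_Integration.integral_cong refl)
      fix v :: "real^'n"
      have q: "(u - v) \<bullet> (A *v (u - v)) = u \<bullet> (A *v u) - 2 * ((A *v u) \<bullet> v) + v \<bullet> (A *v v)"
      proof -
        have "u \<bullet> (A *v v) = (A *v u) \<bullet> v" by (rule sym_dot[OF symA])
        moreover have "v \<bullet> (A *v u) = (A *v u) \<bullet> v" by (rule inner_commute)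
        ultimately show ?thesis
          by (simp add: matrix_vector_mult_diff_distrib inner_diff_left inner_diff_right)
      qed
      show "mvn_density S (u - v) * D (u - (u - v)) = (1/k) * exp (- (u \<bullet> (A *v u)) / 2) * (G v * exp ((A *v u) \<bullet> v))"
        unfolding dens q G_def
        by (simp add: exp_add[symmetric] exp_diff field_simps)
    qed
    also have "\<dots> = (1/k) * exp (- (u \<bullet> (A *v u)) / 2) * L (A *v u)"
      unfolding L_def by simp
    finally show ?thesis .
  qed
  have Bz: "(\<chi> i. b i * z$i) = Bm *v z" for z unfolding Bm_def by (rule diag_mult)
  have hypL: "AE z in K. L (C *v z) = 0"
    using hyp
  proof (rule AE_mp, intro AE_I2 impI)
    fix z assume "(\<integral>e. D ((\<chi> i. b i * z$i) - e) \<partial>mvn S) = 0"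
    then have "(1/k) * exp (- ((Bm *v z) \<bullet> (A *v (Bm *v z))) / 2) * L (A *v (Bm *v z)) = 0"
      unfolding Bz ident .
    then show "L (C *v z) = 0" using k by (simp add: C_def matrix_vector_mul_assoc)
  qed
  define Ob where "Ob = {z. L (C *v z) \<noteq> 0}"
  have openO: "open Ob" unfolding Ob_def by (rule open_Collect_neq[OF contF continuous_on_const])
  have spK: "space K = UNIV" using sets_eq_imp_space_eq[OF sK] by simp
  have OK: "Ob \<in> sets K" using openO sK by simp
  have "emeasure K Ob = 0"
    using hypL by (subst (asm) AE_iff_measurable[OF OK]) (auto simp: Ob_def spK)
  then have Oe: "Ob = {}" using supp openO unfolding support_of_def by force
  have Lall: "L t = 0" for t
  proof -
    define z where "z = (\<chi> i. (S *v t)$i / b i)"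
    have "Bm *v z = S *v t" using b by (simp add: Bz[symmetric] z_def vec_eq_iff)
    then have "C *v z = t"
      by (simp add: C_def matrix_vector_mul_assoc[symmetric] A_def matrix_vector_mul_assoc matrix_inv_both(2)[OF inv])
    moreover have "L (C *v z) = 0" using Oe unfolding Ob_def by auto
    ultimately show ?thesis by simp
  qed
  have "AE v in lborel. G v = 0"
    by (rule exp_moment_zero[OF Gm intG]) (simp add: L_def[symmetric] Lall)
  then show ?thesis by (rule AE_mp) (intro AE_I2, simp add: G_def)
qed



lemma swap_meas: "(\<lambda>(w::'w::euclidean_space, z::real^'i). (z, w)) \<in> borel \<Otimes>\<^sub>M borel \<rightarrow>\<^sub>M (borel :: ((real^'i) \<times> 'w) measure)"
  unfolding borel_prod[symmetric] by measurable

lemma disint_AE: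
  fixes Px :: "((real^'i) \<times> 'w::euclidean_space) measure" and Kz :: "'w \<Rightarrow> (real^'i) measure"
  assumes sPx: "sets Px = sets borel" and cd: "cond_dist_z_given_w Px Kz" and ps: "prob_space Px"
  and P: "AE x in Px. P x"
  shows "AE w in distr Px borel snd. AE z in Kz w. P (z, w)"
proof -
  define mu where "mu = distr Px borel snd"
  have Kzm: "Kz \<in> borel \<rightarrow>\<^sub>M prob_algebra borel" and eqr: "\<And>A B. A \<in> sets borel \<Longrightarrow> B \<in> sets borel \<Longrightarrow>
        emeasure Px (A \<times> B) = (\<integral>\<^sup>+ w. indicator B w * emeasure (Kz w) A \<partial>mu)"
    using cd unfolding cond_dist_z_given_w_def mu_def by auto
  have Kzs: "Kz \<in> mu \<rightarrow>\<^sub>M subprob_algebra borel"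
    using measurable_prob_algebraD[OF Kzm] unfolding mu_def by (simp add: measurable_cong_sets[OF sets_distr refl])
  define Nk where "Nk w = distr (Kz w) (borel :: ((real^'i) \<times> 'w) measure) (\<lambda>z. (z, w))" for w
  have Nkm: "Nk \<in> mu \<rightarrow>\<^sub>M subprob_algebra borel"
    unfolding Nk_def
  proof (rule measurable_distr2[where f="\<lambda>w z. (z, w)"])
    show "(\<lambda>(w, z::real^'i). (z, w)) \<in> mu \<Otimes>\<^sub>M borel \<rightarrow>\<^sub>M (borel :: ((real^'i) \<times> 'w) measure)"
      unfolding mu_def
      by (subst measurable_cong_sets[OF sets_pair_measure_cong[OF sets_distr refl] refl]) (rule swap_meas)
    show "Kz \<in> mu \<rightarrow>\<^sub>M subprob_algebra borel" by (rule Kzs)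
  qed
  have spmu: "space mu = UNIV" unfolding mu_def by simp
  have sKz: "sets (Kz w) = sets borel" for w
    using measurable_space[OF Kzm, of w] by (simp add: space_prob_algebra)
  have spKz: "space (Kz w) = UNIV" for w using sets_eq_imp_space_eq[OF sKz[of w]] by simp
  have eqB: "Px = mu \<bind> Nk"
  proof (rule measure_eqI_generator_eq[where E="{a \<times> b | a b. a \<in> sets (borel :: (real^'i) measure) \<and> b \<in> sets (borel :: 'w measure)}" and \<Omega>=UNIV and A="\<lambda>_. UNIV"])
    show "Int_stable {a \<times> b | a b. a \<in> sets (borel :: (real^'i) measure) \<and> b \<in> sets (borel :: 'w measure)}"
      by (rule Int_stable_pair_measure_generator)
    show "{a \<times> b | a b. a \<in> sets (borel :: (real^'i) measure) \<and> b \<in> sets (borel :: 'w measure)} \<subseteq> Pow UNIV" by auto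
    have sg: "sets (borel :: ((real^'i) \<times> 'w) measure) = sigma_sets UNIV {a \<times> b | a b. a \<in> sets (borel :: (real^'i) measure) \<and> b \<in> sets (borel :: 'w measure)}"
      unfolding borel_prod[symmetric] sets_pair_measure by simp
    show "sets Px = sigma_sets UNIV {a \<times> b | a b. a \<in> sets (borel :: (real^'i) measure) \<and> b \<in> sets (borel :: 'w measure)}"
      using sPx sg by simp
    have sB: "sets (mu \<bind> Nk) = sets (borel :: ((real^'i) \<times> 'w) measure)"
      by (rule sets_bind) (auto simp: Nk_def spmu)
    show "sets (mu \<bind> Nk) = sigma_sets UNIV {a \<times> b | a b. a \<in> sets (borel :: (real^'i) measure) \<and> b \<in> sets (borel :: 'w measure)}"
      using sB sg by simp
    have U: "(UNIV :: ((real^'i) \<times> 'w) set) \<in> {a \<times> b | a b. a \<in> sets (borel :: (real^'i) measure) \<and> b \<in> sets (borel :: 'w measure)}"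
      by (rule CollectI, rule exI[of _ UNIV], rule exI[of _ UNIV]) simp
    then show "range (\<lambda>_. UNIV) \<subseteq> {a \<times> b | a b. a \<in> sets (borel :: (real^'i) measure) \<and> b \<in> sets (borel :: 'w measure)}"
      by (simp only: range_subsetD image_subset_iff) simp
    show "(\<Union>i::nat. UNIV) = (UNIV :: ((real^'i) \<times> 'w) set)" by simp
    show "emeasure Px UNIV \<noteq> \<infinity>" for i :: nat
      using prob_space.emeasure_space_1[OF ps] sets_eq_imp_space_eq[OF sPx] by simp
    fix X assume "X \<in> {a \<times> b | a b. a \<in> sets (borel :: (real^'i) measure) \<and> b \<in> sets (borel :: 'w measure)}"
    then obtain a b where X: "X = a \<times> b" and a: "a \<in> sets borel" and b: "b \<in> sets borel" by auto
    have Xm: "X \<in> sets (borel :: ((real^'i) \<times> 'w) measure)"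
      unfolding X borel_prod[symmetric] using a b by simp
    have "emeasure (mu \<bind> Nk) X = (\<integral>\<^sup>+ w. emeasure (Nk w) X \<partial>mu)"
      using Xm by (intro emeasure_bind[OF _ Nkm]) (auto simp: spmu)
    also have "\<dots> = (\<integral>\<^sup>+ w. indicator b w * emeasure (Kz w) a \<partial>mu)"
    proof (intro nn_integral_cong)
      fix w
      have zm: "(\<lambda>z. (z, w)) \<in> Kz w \<rightarrow>\<^sub>M (borel :: ((real^'i) \<times> 'w) measure)"
        by (simp add: measurable_cong_sets[OF sKz refl] borel_prod[symmetric])
      have "emeasure (Nk w) X = emeasure (Kz w) ((\<lambda>z. (z, w)) -` X \<inter> space (Kz w))"
        unfolding Nk_def using Xm by (rule emeasure_distr[OF zm])
      also have "(\<lambda>z. (z, w)) -` X \<inter> space (Kz w) = (if w \<in> b then a else {})"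
        by (auto simp: X spKz)
      finally show "emeasure (Nk w) X = indicator b w * emeasure (Kz w) a"
        by (simp add: indicator_def)
    qed
    also have "\<dots> = emeasure Px X" unfolding X by (rule eqr[OF a b, symmetric])
    finally show "emeasure Px X = emeasure (mu \<bind> Nk) X" by simp
  qed
  from P obtain N0 where N0: "{x \<in> space Px. \<not> P x} \<subseteq> N0" "emeasure Px N0 = 0" "N0 \<in> sets Px"
    by (rule AE_E)
  have N0b: "N0 \<in> sets (borel :: ((real^'i) \<times> 'w) measure)" using N0(3) sPx by simp
  have "AE x in Px. x \<notin> N0" using N0 by (intro AE_not_in) auto
  then have "AE x in mu \<bind> Nk. x \<notin> N0" unfolding eqB .
  then have A1: "AE w in mu. AE y in Nk w. y \<notin> N0"
    using AE_bind[OF Nkm, of "\<lambda>x. x \<notin> N0"] N0b by simp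
  have step: "AE z in Kz w. P (z, w)" if Aw: "AE y in Nk w. y \<notin> N0" for w
  proof -
    have zm: "(\<lambda>z. (z, w)) \<in> Kz w \<rightarrow>\<^sub>M (borel :: ((real^'i) \<times> 'w) measure)"
      by (simp add: measurable_cong_sets[OF sKz refl] borel_prod[symmetric])
    have "{x \<in> space (borel::((real^'i) \<times> 'w) measure). x \<notin> N0} = space borel - N0" by auto
    then have N0c: "{x \<in> space (borel::((real^'i) \<times> 'w) measure). x \<notin> N0} \<in> sets borel"
      using N0b by auto
    have "AE z in Kz w. (z, w) \<notin> N0" using Aw unfolding Nk_def AE_distr_iff[OF zm N0c] .
    then show "AE z in Kz w. P (z, w)"
      by (rule AE_mp) (use N0(1) sets_eq_imp_space_eq[OF sPx] in \<open>auto intro!: AE_I2\<close>)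
  qed
  have "AE w in mu. AE z in Kz w. P (z, w)"
    using A1 by (rule AE_mp) (rule AE_I2, rule impI, erule step)
  then show ?thesis unfolding mu_def .
qed



lemma AE_in_support:
  fixes mu :: "'a::{second_countable_topology} measure"
  assumes smu: "sets mu = sets borel"
  shows "AE w in mu. w \<in> support_of mu"
proof -
  define F where "F = {U. open U \<and> emeasure mu U = 0}"
  obtain F' where F': "F' \<subseteq> F" "countable F'" "\<Union>F' = \<Union>F"
    using Lindelof[of F] unfolding F_def by auto
  have "(\<Union>U\<in>F'. U) \<in> null_sets mu"
  proof (rule null_sets_UN'[OF F'(2)])
    fix U assume "U \<in> F'"
    then have "open U" "emeasure mu U = 0" using F'(1) unfolding F_def by auto
    then show "U \<in> null_sets mu" using smu by (auto simp: null_sets_def)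
  qed
  then have "AE w in mu. w \<notin> (\<Union>U\<in>F'. U)" by (rule AE_not_in)
  then show ?thesis
  proof (rule AE_mp, intro AE_I2 impI)
    fix w assume "w \<notin> (\<Union>U\<in>F'. U)"
    then have "w \<notin> \<Union>F" using F'(3) by auto
    then show "w \<in> support_of mu" unfolding support_of_def F_def
      by (auto simp: zero_less_iff_neq_zero)
  qed
qed

lemma meas_section:
  assumes "(\<lambda>(a, b). f a b) \<in> borel_measurable (borel :: ('a::second_countable_topology \<times> 'b::second_countable_topology) measure)"
  shows "f a \<in> borel_measurable borel"
proof -
  have p: "(\<lambda>b. (a, b)) \<in> (borel :: 'b measure) \<rightarrow>\<^sub>M (borel :: ('a \<times> 'b) measure)"
    unfolding borel_prod[symmetric] by measurable
  have "(\<lambda>b. (\<lambda>(a, b). f a b) (a, b)) \<in> borel_measurable borel"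
    by (rule measurable_compose[OF p assms])
  then show ?thesis by simp
qed

lemma mvn_sets: "sets (mvn S) = sets borel" unfolding mvn_def by simp

lemma mvn_space: "space (mvn S) = UNIV" unfolding mvn_def by simp

lemma mvn_finite:
  fixes S :: "real^'n^'n"
  assumes sym: "transpose S = S" and pd: "\<forall>v. v \<noteq> 0 \<longrightarrow> v \<bullet> (S *v v) > 0"
  and kpos: "0 < sqrt ((2 * pi) ^ CARD('n) * det S)"
  shows "finite_measure (mvn S)"
proof -
  define A where "A = matrix_inv S"
  have pdA: "\<forall>v. v \<noteq> 0 \<longrightarrow> v \<bullet> (A *v v) > 0" unfolding A_def by (rule matrix_inv_pd[OF pd sym])
  obtain l where l: "l > 0" "\<And>v. l * norm v ^ 2 \<le> v \<bullet> (A *v v)" using pd_lower_bound[OF pdA] by blast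
  define k where "k = sqrt ((2 * pi) ^ CARD('n) * det S)"
  have k: "k > 0" using kpos by (simp add: k_def)
  have dens: "mvn_density S e = exp (- (e \<bullet> (A *v e)) / 2) / k" for e
    by (simp add: mvn_density_def A_def k_def)
  have le: "mvn_density S e \<le> exp (- (l/2) * norm e ^ 2) / k" for e
    unfolding dens using k l(2)[of e] by (intro divide_right_mono) auto
  have int: "integrable lborel (\<lambda>e::real^'n. exp (- (l/2) * norm e ^ 2) / k)"
    by (intro integrable_divide_zero integrable_exp_neg_sq) (simp add: l(1))
  have "emeasure (mvn S) (space (mvn S)) = (\<integral>\<^sup>+e. ennreal (mvn_density S e) \<partial>lborel)"
    unfolding mvn_def by (subst emeasure_density) (auto simp: nn_integral_indicator[symmetric])
  also have "\<dots> \<le> (\<integral>\<^sup>+e. ennreal (exp (- (l/2) * norm (e::real^'n) ^ 2) / k) \<partial>lborel)"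
    by (intro nn_integral_mono ennreal_leI le)
  also have "\<dots> < \<infinity>" using int k by (simp add: integrable_iff_bounded)
  finally show ?thesis by (intro finite_measureI) simp
qed

lemma mvn_null:
  fixes S :: "real^'n^'n"
  assumes "\<not> 0 < sqrt ((2 * pi) ^ CARD('n) * det S)"
  shows "AE e in mvn S. P e"
proof -
  have "mvn_density S e \<le> 0" for e
    using assms unfolding mvn_density_def by (simp add: divide_nonneg_nonpos)
  then show ?thesis unfolding mvn_def
    by (subst AE_density) (auto intro!: AE_I2 simp: ennreal_neg)
qed

lemma index_v_eq: "index_v \<beta> x e = (\<chi> i. \<beta> i (snd x) * fst x $ i) - e"
  by (simp add: index_v_def vec_eq_iff)



theorem proposition2:
  fixes Px :: "((real^'i::finite) \<times> 'w::euclidean_space) measure"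
    and Kz :: "'w \<Rightarrow> (real^'i) measure"
    and \<alpha> :: "'i \<Rightarrow> 'i set \<Rightarrow> 'w \<Rightarrow> real"
    and \<beta> :: "'i \<Rightarrow> 'w \<Rightarrow> real"
    and \<Sigma> :: "'w \<Rightarrow> real^'i^'i"
    and h0 h' :: "('i \<Rightarrow> bool) \<Rightarrow> ((real^'i) \<times> 'w) \<Rightarrow> real^'i \<Rightarrow> real"
  assumes "CARD('i) \<ge> 2"
    and "prob_space Px" and "sets Px = sets borel"
    and "cond_dist_z_given_w Px Kz"
    and "in_Theta \<alpha> \<beta> \<Sigma>"
    and "distribution_of_play h0" and "distribution_of_play h'"
    and "assm_A1 Px Kz \<beta>" and "assm_A2 Px \<Sigma>"
    and "assm_A3 Px \<beta> \<Sigma> h0" and "assm_A3 Px \<beta> \<Sigma> h'"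
    and "AE x in Px. \<forall>y. cond_exp_play h0 \<Sigma> x y = cond_exp_play h' \<Sigma> x y"
  shows "AE x in Px. AE e in mvn (\<Sigma> (snd x)). \<forall>y. h' y x e = h0 y x e"
proof -
  define mu where "mu = distr Px borel snd"
  have smu: "sets mu = sets borel" by (simp add: mu_def)
  have Kzm: "Kz \<in> borel \<rightarrow>\<^sub>M prob_algebra borel"
    using assms(4) unfolding cond_dist_z_given_w_def by auto
  have sKz: "sets (Kz w) = sets borel" for w
    using measurable_space[OF Kzm, of w] by (simp add: space_prob_algebra)
  have A1s: "support_of (Kz w) = UNIV" if "w \<in> support_of mu" for w
    using assms(8) that unfolding assm_A1_def mu_def by auto
  have A1b: "\<beta> i w \<noteq> 0" if "w \<in> support_of mu" for i w
    using assms(8) that unfolding assm_A1_def mu_def by auto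
  have A2s: "transpose (\<Sigma> w) = \<Sigma> w" if "w \<in> support_of mu" for w
    using assms(9) that unfolding assm_A2_def mu_def by auto
  have A2p: "\<forall>v. v \<noteq> 0 \<longrightarrow> v \<bullet> (\<Sigma> w *v v) > 0" if "w \<in> support_of mu" for w
    using assms(9) that unfolding assm_A2_def mu_def by auto
  obtain ht0 :: "('i \<Rightarrow> bool) \<Rightarrow> 'w \<Rightarrow> real^'i \<Rightarrow> real" where
    ht0m: "\<And>y. (\<lambda>(w, v). ht0 y w v) \<in> borel_measurable borel" and
    ht0ae: "AE x in Px. AE e in mvn (\<Sigma> (snd x)). \<forall>y. h0 y x e = ht0 y (snd x) (index_v \<beta> x e)"
    using assms(10) unfolding assm_A3_def by blast
  obtain ht1 :: "('i \<Rightarrow> bool) \<Rightarrow> 'w \<Rightarrow> real^'i \<Rightarrow> real" where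
    ht1m: "\<And>y. (\<lambda>(w, v). ht1 y w v) \<in> borel_measurable borel" and
    ht1ae: "AE x in Px. AE e in mvn (\<Sigma> (snd x)). \<forall>y. h' y x e = ht1 y (snd x) (index_v \<beta> x e)"
    using assms(11) unfolding assm_A3_def by blast
  have h0b': "\<forall>y x e. 0 \<le> h0 y x e \<and> h0 y x e \<le> 1"
    using assms(6) unfolding distribution_of_play_def by blast
  have h1b': "\<forall>y x e. 0 \<le> h' y x e \<and> h' y x e \<le> 1"
    using assms(7) unfolding distribution_of_play_def by blast
  have h0b: "0 \<le> h0 y x e" "h0 y x e \<le> 1" for y x e
    using h0b' by blast+
  have h1b: "0 \<le> h' y x e" "h' y x e \<le> 1" for y x e
    using h1b' by blast+
  have h0m: "(\<lambda>(x, e). h0 y x e) \<in> borel_measurable borel" for y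
    using assms(6) unfolding distribution_of_play_def by blast
  have h1m: "(\<lambda>(x, e). h' y x e) \<in> borel_measurable borel" for y
    using assms(7) unfolding distribution_of_play_def by blast
  define c0 where "c0 y w v = max 0 (min 1 (ht0 y w v))" for y w v
  define c1 where "c1 y w v = max 0 (min 1 (ht1 y w v))" for y w v
  define D where "D y w v = c0 y w v - c1 y w v" for y w v
  have c0m: "c0 y w \<in> borel_measurable borel" for y w
  proof -
    have [measurable]: "ht0 y w \<in> borel_measurable borel" by (rule meas_section[OF ht0m])
    show ?thesis unfolding c0_def[abs_def] by measurable
  qed
  have c1m: "c1 y w \<in> borel_measurable borel" for y w
  proof -
    have [measurable]: "ht1 y w \<in> borel_measurable borel" by (rule meas_section[OF ht1m])
    show ?thesis unfolding c1_def[abs_def] by measurable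
  qed
  have Dm: "D y w \<in> borel_measurable borel" for y w
    using c0m[of y w] c1m[of y w] unfolding D_def[abs_def] by measurable
  have Db: "\<bar>D y w v\<bar> \<le> 1" for y w v
    unfolding D_def c0_def c1_def by (auto simp: max_def min_def)
  have c0eq: "h0 y x e = c0 y w v" if "h0 y x e = ht0 y w v" for y x e w v
    using that h0b[of y x e] unfolding c0_def by (auto simp: max_def min_def)
  have c1eq: "h' y x e = c1 y w v" if "h' y x e = ht1 y w v" for y x e w v
    using that h1b[of y x e] unfolding c1_def by (auto simp: max_def min_def)
  define P where "P x \<longleftrightarrow>
      (AE e in mvn (\<Sigma> (snd x)). \<forall>y. h0 y x e = ht0 y (snd x) (index_v \<beta> x e)) \<and>
      (AE e in mvn (\<Sigma> (snd x)). \<forall>y. h' y x e = ht1 y (snd x) (index_v \<beta> x e)) \<and>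
      (\<forall>y. cond_exp_play h0 \<Sigma> x y = cond_exp_play h' \<Sigma> x y)" for x
  have AEP: "AE x in Px. P x"
    using ht0ae ht1ae assms(12) by eventually_elim (simp add: P_def)
  have AEw: "AE w in mu. AE z in Kz w. P (z, w)"
    unfolding mu_def by (rule disint_AE[OF assms(3) assms(4) assms(2) AEP])
  have AEs: "AE w in mu. w \<in> support_of mu" by (rule AE_in_support[OF smu])
  define kk where "kk w = sqrt ((2 * pi) ^ CARD('i) * det (\<Sigma> w))" for w
  define Sg where "Sg w \<longleftrightarrow> (\<not> 0 < kk w) \<or> (\<forall>y. AE v in lborel. D y w v = 0)" for w
  have good: "Sg w" if ws: "w \<in> support_of mu" and wz: "AE z in Kz w. P (z, w)" for w
  proof (cases "0 < kk w")
    case False then show ?thesis by (simp add: Sg_def)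
  next
    case True
    then have kw: "0 < sqrt ((2 * pi) ^ CARD('i) * det (\<Sigma> w))" by (simp add: kk_def)
    have fin: "finite_measure (mvn (\<Sigma> w))" by (rule mvn_finite[OF A2s[OF ws] A2p[OF ws] kw])
    have "AE v in lborel. D y w v = 0" for y
    proof (rule conv_zero[OF A2s[OF ws] A2p[OF ws] kw])
      show "\<And>i. \<beta> i w \<noteq> 0" using A1b[OF ws] .
      show "D y w \<in> borel_measurable borel" by (rule Dm)
      show "\<And>v. \<bar>D y w v\<bar> \<le> 1" by (rule Db)
      show "sets (Kz w) = sets borel" by (rule sKz)
      show "support_of (Kz w) = UNIV" by (rule A1s[OF ws])
      show "AE z in Kz w. (\<integral>e. D y w ((\<chi> i. \<beta> i w * z$i) - e) \<partial>mvn (\<Sigma> w)) = 0"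
        using wz
      proof (rule AE_mp, intro AE_I2 impI)
        fix z assume Pz: "P (z, w)"
        define u where "u = (\<chi> i. \<beta> i w * z$i)"
        have idx: "index_v \<beta> (z, w) e = u - e" for e by (simp add: index_v_eq u_def)
        have mh0: "(\<lambda>e. h0 y (z, w) e) \<in> borel_measurable (mvn (\<Sigma> w))"
          using meas_section[OF h0m[of y], of "(z, w)"] by (simp add: measurable_cong_sets[OF mvn_sets refl])
        have mh1: "(\<lambda>e. h' y (z, w) e) \<in> borel_measurable (mvn (\<Sigma> w))"
          using meas_section[OF h1m[of y], of "(z, w)"] by (simp add: measurable_cong_sets[OF mvn_sets refl])
        have mc0: "(\<lambda>e. c0 y w (u - e)) \<in> borel_measurable (mvn (\<Sigma> w))"
          using c0m[of y w] by (simp add: measurable_cong_sets[OF mvn_sets refl])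
        have mc1: "(\<lambda>e. c1 y w (u - e)) \<in> borel_measurable (mvn (\<Sigma> w))"
          using c1m[of y w] by (simp add: measurable_cong_sets[OF mvn_sets refl])
        have e0: "(\<integral>e. h0 y (z, w) e \<partial>mvn (\<Sigma> w)) = (\<integral>e. c0 y w (u - e) \<partial>mvn (\<Sigma> w))"
        proof (rule integral_cong_AE[OF mh0 mc0])
          have "AE e in mvn (\<Sigma> (snd (z, w))). \<forall>y. h0 y (z, w) e = ht0 y (snd (z, w)) (index_v \<beta> (z, w) e)"
            using Pz unfolding P_def by blast
          then have "AE e in mvn (\<Sigma> w). \<forall>y. h0 y (z, w) e = ht0 y w (u - e)"
            unfolding snd_conv idx .
          then show "AE e in mvn (\<Sigma> w). h0 y (z, w) e = c0 y w (u - e)"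
            by (rule AE_mp) (intro AE_I2 impI, blast intro: c0eq)
        qed
        have e1: "(\<integral>e. h' y (z, w) e \<partial>mvn (\<Sigma> w)) = (\<integral>e. c1 y w (u - e) \<partial>mvn (\<Sigma> w))"
        proof (rule integral_cong_AE[OF mh1 mc1])
          have "AE e in mvn (\<Sigma> (snd (z, w))). \<forall>y. h' y (z, w) e = ht1 y (snd (z, w)) (index_v \<beta> (z, w) e)"
            using Pz unfolding P_def by blast
          then have "AE e in mvn (\<Sigma> w). \<forall>y. h' y (z, w) e = ht1 y w (u - e)"
            unfolding snd_conv idx .
          then show "AE e in mvn (\<Sigma> w). h' y (z, w) e = c1 y w (u - e)"
            by (rule AE_mp) (intro AE_I2 impI, blast intro: c1eq)
        qed
        have int0: "integrable (mvn (\<Sigma> w)) (\<lambda>e. c0 y w (u - e))"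
        proof (rule finite_measure.integrable_const_bound[OF fin, where B=1])
          show "AE e in mvn (\<Sigma> w). norm (c0 y w (u - e)) \<le> 1"
            by (intro AE_I2) (auto simp: c0_def)
        qed (rule mc0)
        have int1: "integrable (mvn (\<Sigma> w)) (\<lambda>e. c1 y w (u - e))"
        proof (rule finite_measure.integrable_const_bound[OF fin, where B=1])
          show "AE e in mvn (\<Sigma> w). norm (c1 y w (u - e)) \<le> 1"
            by (intro AE_I2) (auto simp: c1_def)
        qed (rule mc1)
        have "(\<integral>e. D y w (u - e) \<partial>mvn (\<Sigma> w)) = (\<integral>e. c0 y w (u - e) \<partial>mvn (\<Sigma> w)) - (\<integral>e. c1 y w (u - e) \<partial>mvn (\<Sigma> w))"
          unfolding D_def by (rule Bochner_Integration.integral_diff[OF int0 int1])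
        also have "\<dots> = cond_exp_play h0 \<Sigma> (z, w) y - cond_exp_play h' \<Sigma> (z, w) y"
          using e0 e1 by (simp add: cond_exp_play_def)
        also have "\<dots> = 0" using Pz unfolding P_def by simp
        finally show "(\<integral>e. D y w ((\<chi> i. \<beta> i w * z$i) - e) \<partial>mvn (\<Sigma> w)) = 0" unfolding u_def .
      qed
    qed
    then show ?thesis by (simp add: Sg_def)
  qed
  have AESg: "AE w in mu. Sg w"
    using AEs AEw by eventually_elim (rule good)
  have sndm: "snd \<in> Px \<rightarrow>\<^sub>M (borel :: 'w measure)"
    by (subst measurable_cong_sets[OF assms(3) refl]) (unfold borel_prod[symmetric], rule measurable_snd)
  have AEx: "AE x in Px. Sg (snd x)"
    using AESg unfolding mu_def by (rule AE_distrD[OF sndm])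
  have final: "AE e in mvn (\<Sigma> (snd x)). \<forall>y. h' y x e = h0 y x e" if Px: "P x" and Sx: "Sg (snd x)" for x
  proof -
    obtain z w where x: "x = (z, w)" by (cases x)
    show ?thesis
    proof (cases "0 < kk w")
      case False
      then show ?thesis unfolding x kk_def by (simp add: mvn_null)
    next
      case True
      then have DZ: "\<forall>y. AE v in lborel. D y w v = 0" using Sx unfolding Sg_def x by simp
      define u where "u = (\<chi> i. \<beta> i w * z$i)"
      have idx: "index_v \<beta> (z, w) e = u - e" for e by (simp add: index_v_eq u_def)
      have "AE e in mvn (\<Sigma> w). \<forall>y\<in>UNIV. D y w (u - e) = 0"
        by (rule AE_finite_allI) (use DZ in \<open>auto intro: AE_mvn_transfer\<close>)
      moreover have "AE e in mvn (\<Sigma> w). \<forall>y. h0 y (z, w) e = ht0 y w (u - e)"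
      proof -
        have "AE e in mvn (\<Sigma> (snd (z, w))). \<forall>y. h0 y (z, w) e = ht0 y (snd (z, w)) (index_v \<beta> (z, w) e)"
          using Px unfolding P_def x by blast
        then show ?thesis unfolding snd_conv idx .
      qed
      moreover have "AE e in mvn (\<Sigma> w). \<forall>y. h' y (z, w) e = ht1 y w (u - e)"
      proof -
        have "AE e in mvn (\<Sigma> (snd (z, w))). \<forall>y. h' y (z, w) e = ht1 y (snd (z, w)) (index_v \<beta> (z, w) e)"
          using Px unfolding P_def x by blast
        then show ?thesis unfolding snd_conv idx .
      qed
      ultimately have "AE e in mvn (\<Sigma> w). \<forall>y. h' y (z, w) e = h0 y (z, w) e"
      proof eventually_elim
        case (elim e)
        show ?case
        proof
          fix y
          have "h0 y (z, w) e = c0 y w (u - e)" using elim(2) by (intro c0eq) simp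
          moreover have "h' y (z, w) e = c1 y w (u - e)" using elim(3) by (intro c1eq) simp
          moreover have "D y w (u - e) = 0" using elim(1) by simp
          ultimately show "h' y (z, w) e = h0 y (z, w) e" by (simp add: D_def)
        qed
      qed
      then show ?thesis unfolding x snd_conv .
    qed
  qed
  show ?thesis using AEP AEx by eventually_elim (rule final)
qed


end
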